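(* For $n\ge3$ let $\mathcal{K}_n(\lambda)=\det(\lambda I_n-M_n)$, where $M_n$ is the $n\times n$ matrix with $(M_n)_{j,i}=1$ if $i\ge j-1$ or $(j,i)=(n,n-2)$, and $(M_n)_{j,i}=0$ otherwise. Then $\mathcal{K}_3(\lambda)=\lambda^3-3\lambda^2$, $\mathcal{K}_4(\lambda)=\lambda^4-4\lambda^3+2\lambda^2$, and $$\mathcal{K}_n(\lambda)=\lambda\,\mathcal{K}_{n-1}(\lambda)-\lambda\,\mathcal{K}_{n-2}(\lambda)\qquad(n\ge5).$$ *)

theory Defs
  imports Complex_Main "Jordan_Normal_Form.Determinant"
begin

text \<open>The paper indexes rows j and columns i from 1 to n;
  Jordan_Normal_Form matrices are 0-indexed, so entry (r,c) corresponds to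
  j = r+1, i = c+1. The condition i \<ge> j - 1 is written as j \<le> i + 1
  (no natural-number truncation issues).\<close>
definition M :: "nat \<Rightarrow> complex mat" where
  "M n = mat n n (\<lambda>(r, c). let j = r + 1; i = c + 1 in
          if j \<le> i + 1 \<or> (j = n \<and> i = n - 2) then 1 else 0)"

definition K :: "nat \<Rightarrow> complex \<Rightarrow> complex" where
  "K n x = det (x \<cdot>\<^sub>m 1\<^sub>m n - M n)"

end

theory Submission
  imports Defs
begin

definition a :: "nat \<Rightarrow> complex \<Rightarrow> nat \<times> nat \<Rightarrow> complex" where
  "a n x = (\<lambda>(r,c). (if r = c then x else 0) -
      (if r \<le> c + 1 \<or> (r + 1 = n \<and> c + 1 = n - 2) then 1 else 0))"

lemma K_a: "K n x = det (mat n n (a n x))"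
  unfolding K_def
  by (rule arg_cong[where f=det], rule eq_matI, auto simp: M_def a_def Let_def)

lemma minor00: "mat_delete (mat (Suc k) (Suc k) (a (Suc k) x)) 0 0 = mat k k (a k x)"
  by (rule eq_matI) (auto simp: mat_delete_def a_def)

lemma det1: "A \<in> carrier_mat 1 1 \<Longrightarrow> det A = A $$ (0,0)"
  by (simp add: det_single)

lemma det2: assumes "A \<in> carrier_mat 2 2"
  shows "det A = A $$ (0,0) * A $$ (1,1) - A $$ (0,1) * A $$ (1,0)"
proof -
  have "det A = (\<Sum>i<2. A $$ (i,0) * cofactor A i 0)"
    by (rule laplace_expansion_column[OF assms]) auto
  also have "\<dots> = A $$ (0,0) * cofactor A 0 0 + A $$ (1,0) * cofactor A 1 0"
    by (simp add: numeral_2_eq_2)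
  also have "cofactor A 0 0 = A $$ (1,1)"
    unfolding cofactor_def using assms
    by (subst det1, auto intro: mat_delete_carrier simp: mat_delete_def)
  also have "cofactor A 1 0 = - A $$ (0,1)"
    unfolding cofactor_def using assms
    by (subst det1, auto intro: mat_delete_carrier simp: mat_delete_def)
  finally show ?thesis by (simp add: algebra_simps)
qed

lemma det3: assumes "A \<in> carrier_mat 3 3"
  shows "det A = A $$ (0,0) * (A $$ (1,1) * A $$ (2,2) - A $$ (1,2) * A $$ (2,1))
     - A $$ (1,0) * (A $$ (0,1) * A $$ (2,2) - A $$ (0,2) * A $$ (2,1))
     + A $$ (2,0) * (A $$ (0,1) * A $$ (1,2) - A $$ (0,2) * A $$ (1,1))"
proof -
  have dA: "dim_row A = 3" "dim_col A = 3" using assms by auto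
  have c: "\<And>i. mat_delete A i 0 \<in> carrier_mat 2 2"
    using mat_delete_carrier[OF assms] by simp
  have "det A = (\<Sum>i<3. A $$ (i,0) * cofactor A i 0)"
    by (rule laplace_expansion_column[OF assms]) auto
  also have "\<dots> = A $$ (0,0) * cofactor A 0 0 + A $$ (1,0) * cofactor A 1 0 + A $$ (2,0) * cofactor A 2 0"
    by (simp add: numeral_3_eq_3 numeral_2_eq_2)
  also have "cofactor A 0 0 = A $$ (1,1) * A $$ (2,2) - A $$ (1,2) * A $$ (2,1)"
    unfolding cofactor_def using c[of 0]
    by (subst det2) (simp_all add: mat_delete_def dA numeral_2_eq_2)
  also have "cofactor A 1 0 = - (A $$ (0,1) * A $$ (2,2) - A $$ (0,2) * A $$ (2,1))"
    unfolding cofactor_def using c[of 1]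
    by (subst det2) (simp_all add: mat_delete_def dA numeral_2_eq_2)
  also have "cofactor A 2 0 = A $$ (0,1) * A $$ (1,2) - A $$ (0,2) * A $$ (1,1)"
    unfolding cofactor_def using c[of 2]
    by (subst det2) (simp_all add: mat_delete_def dA numeral_2_eq_2)
  finally show ?thesis by (simp add: algebra_simps)
qed

lemma K2: "K 2 x = x^2 - 2*x"
  unfolding K_a by (subst det2) (auto simp: a_def power2_eq_square algebra_simps)

lemma K3: "K 3 x = x^3 - 3*x^2"
  unfolding K_a by (subst det3) (auto simp: a_def power2_eq_square power3_eq_cube algebra_simps)

lemma rec: assumes n: "n \<ge> 4"
  shows "K n x = x * K (n - 1) x - x * K (n - 2) x"
proof -
  define D where "D = mat n n (a n x)"
  define E where "E = mat_delete D 0 0"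
  define C where "C = mat_delete D 1 0"
  have D: "D \<in> carrier_mat n n" unfolding D_def by auto
  have E_eq: "E = mat (n-1) (n-1) (a (n-1) x)"
  proof -
    have nn: "n = Suc (n - 1)" using n by simp
    show ?thesis unfolding E_def D_def by (subst nn, subst (2) nn, subst (3) nn, rule minor00)
  qed
  have E: "E \<in> carrier_mat (n-1) (n-1)" unfolding E_eq by auto
  have C: "C \<in> carrier_mat (n-1) (n-1)" unfolding C_def using D by (rule mat_delete_carrier)
  have "det D = (\<Sum>i<n. D $$ (i,0) * cofactor D i 0)"
    by (rule laplace_expansion_column[OF D]) (use n in auto)
  also have "\<dots> = (\<Sum>i\<in>{0,1}. D $$ (i,0) * cofactor D i 0)"
  proof (rule sum.mono_neutral_right)
    have z: "D $$ (i,0) = 0" if "i < n" "i \<ge> 2" for i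
      unfolding D_def using n that by (simp add: a_def) linarith
    show "\<forall>i\<in>{..<n} - {0, 1}. D $$ (i, 0) * cofactor D i 0 = 0"
    proof
      fix i assume "i \<in> {..<n} - {0, 1}"
      then have "i < n" "i \<ge> 2" by auto
      then show "D $$ (i, 0) * cofactor D i 0 = 0" using z by simp
    qed
    show "finite {..<n}" by simp
    show "{0, 1} \<subseteq> {..<n}" using n by auto
  qed
  also have "\<dots> = D $$ (0,0) * cofactor D 0 0 + D $$ (1,0) * cofactor D 1 0"
    by simp
  also have "D $$ (0,0) = x - 1" using n unfolding D_def by (simp add: a_def)
  also have "D $$ (1,0) = -1" using n unfolding D_def by (simp add: a_def)
  also have "cofactor D 0 0 = det E" unfolding cofactor_def E_def by simp
  also have "cofactor D 1 0 = - det C" unfolding cofactor_def C_def by simp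
  finally have 1: "det D = (x - 1) * det E + det C" by simp
  have eqE: "det E = (\<Sum>j<n-1. E $$ (0,j) * cofactor E 0 j)"
    by (rule laplace_expansion_row[OF E]) (use n in auto)
  have eqC: "det C = (\<Sum>j<n-1. C $$ (0,j) * cofactor C 0 j)"
    by (rule laplace_expansion_row[OF C]) (use n in auto)
  have cofCE: "\<And>j. cofactor C 0 j = cofactor E 0 j"
    unfolding cofactor_def C_def E_def
    by (rule arg_cong[where f="\<lambda>t. _ * det t"], rule eq_matI) (auto simp: mat_delete_def D_def)
  have rowC: "\<And>j. j < n - 1 \<Longrightarrow> C $$ (0,j) = -1"
    using n by (simp add: C_def mat_delete_def D_def a_def)
  have rowE: "\<And>j. j < n - 1 \<Longrightarrow> E $$ (0,j) = (if j = 0 then x else 0) - 1"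
    using n by (simp add: E_def mat_delete_def D_def a_def)
  have "det E - det C = (\<Sum>j<n-1. E $$ (0,j) * cofactor E 0 j) - (\<Sum>j<n-1. C $$ (0,j) * cofactor E 0 j)"
    unfolding eqE eqC cofCE ..
  also have "\<dots> = (\<Sum>j<n-1. (E $$ (0,j) - C $$ (0,j)) * cofactor E 0 j)"
    by (simp add: sum_subtractf left_diff_distrib)
  also have "\<dots> = (\<Sum>j<n-1. (if j = 0 then x * cofactor E 0 j else 0))"
    by (rule sum.cong) (auto simp: rowC rowE)
  also have "\<dots> = x * cofactor E 0 0"
    using n by simp
  also have "cofactor E 0 0 = K (n-2) x"
  proof -
    have nn: "n - 1 = Suc (n - 2)" using n by simp
    show ?thesis unfolding cofactor_def E_eq K_a nn minor00 by simp
  qed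
  finally have 2: "det C = det E - x * K (n-2) x" by (simp add: algebra_simps)
  have "K n x = det D" unfolding D_def K_a ..
  also have "\<dots> = x * det E - x * K (n-2) x" using 1 2 by (simp add: algebra_simps)
  also have "det E = K (n-1) x" unfolding E_eq K_a ..
  finally show ?thesis .
qed

lemma K4a: "K 4 x = x * K 3 x - x * K 2 x" using rec[of 4 x] by simp

lemma K4: "K 4 x = x^4 - 4 * x^3 + 2 * x^2"
proof -
  have "K 4 x = x * (x^3 - 3*x^2) - x*(x^2 - 2*x)" by (simp only: K4a K3 K2)
  then show ?thesis by (simp add: power_numeral_reduce algebra_simps)
qed

theorem lemma2:
  shows "(\<forall>x. K 3 x = x^3 - 3 * x^2)
       \<and> (\<forall>x. K 4 x = x^4 - 4 * x^3 + 2 * x^2)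
       \<and> (\<forall>n \<ge> 5. \<forall>x. K n x = x * K (n - 1) x - x * K (n - 2) x)"
proof (intro conjI allI impI)
  fix x :: complex show "K 3 x = x^3 - 3 * x^2" by (rule K3)
next
  fix x :: complex show "K 4 x = x^4 - 4 * x^3 + 2 * x^2" by (rule K4)
next
  fix n :: nat and x :: complex assume n: "n \<ge> 5"
  show "K n x = x * K (n - 1) x - x * K (n - 2) x"
    by (rule rec) (use n in linarith)
qed

end
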